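(* Fix $p\in[1,\infty]$ and write $\|\cdot\|$ for the $\ell_p$ norm on vectors and the induced $\ell_p\to\ell_p$ operator norm on matrices. Let $f:\mathbb{R}^{n_0}\to\mathbb{R}^{n_L}$ be the $L$-layer network defined by $a^{(0)}(x)=x$, $z^{(l)}(x)=W^{(l)}a^{(l-1)}(x)$ and $a^{(l)}(x)=\sigma^{(l)}(z^{(l)}(x))$ for $l=1,\dots,L-1$, and $f(x)=z^{(L)}(x)=W^{(L)}a^{(L-1)}(x)$, where $W^{(l)}\in\mathbb{R}^{n_l\times n_{l-1}}$ and $\sigma^{(l)}(z)=(\sigma^{(l)}_1(z_1),\dots,\sigma^{(l)}_{n_l}(z_{n_l}))$. Suppose each $\sigma^{(l)}_i$ is slope-restricted in $[\alpha^{(l)}_i,\beta^{(l)}_i]$ with $0\le\alpha^{(l)}_i\le\beta^{(l)}_i<\infty$. For $l=1,\dots,L-1$ let $d^{(l)}\in\mathbb{R}^{n_l}$ satisfy $0\le d^{(l)}_i\le\frac{\alpha^{(l)}_i+\beta^{(l)}_i}{2}$ for all $i$, and set $D^{(l)}=\mathrm{diag}(d^{(l)})$ and $D'^{(l)}=\mathrm{diag}(\beta^{(l)}-d^{(l)})$; set $D'^{(L)}=I$. Define $y^{(l)}(x)=D'^{(l)}z^{(l)}(x)$ for $l=1,\dots,L$. Define $m^{(1)}=\|D'^{(1)}W^{(1)}\|$ and, for $l=2,\dots,L$, $$m^{(l)}=\Big\|D'^{(l)}W^{(l)}\prod_{i=1}^{l-1}D^{(i)}W^{(i)}\Big\|+\sum_{j=1}^{l-1}\Big\|D'^{(l)}W^{(l)}\prod_{i=j+1}^{l-1}D^{(i)}W^{(i)}\Big\|\,m^{(j)},$$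 where $\prod_{i=a}^{b}D^{(i)}W^{(i)}=D^{(b)}W^{(b)}\cdots D^{(a)}W^{(a)}$ and the empty product is the identity. Then for each $l=1,\dots,L$, $m^{(l)}$ is a Lipschitz constant (in $\ell_p$) of the map $x\mapsto y^{(l)}(x)$. In particular, $m^{(L)}$ is a Lipschitz constant of $x\mapsto f(x)$.
   Context: A function $\sigma:\mathbb{R}\to\mathbb{R}$ is slope-restricted in $[\alpha,\beta]$ if $\alpha\le\frac{\sigma(x)-\sigma(y)}{x-y}\le\beta$ for all $x\ne y$. A Lipschitz constant $m$ of $g$ in $\ell_p$ means $\|g(x)-g(x')\|_p\le m\|x-x'\|_p$ for all $x,x'$. *)

theory Defs
  imports "HOL-Analysis.Analysis"
begin

text \<open>Vectors of length k are functions nat => real, only entries i < k matter.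
  Matrices of size r x c are functions nat => nat => real, entries (i,j) with i<r, j<c.\<close>

definition lpnorm :: "ereal \<Rightarrow> nat \<Rightarrow> (nat \<Rightarrow> real) \<Rightarrow> real" where
  "lpnorm p k x =
     (if p = \<infinity> then (if k = 0 then 0 else Max {\<bar>x i\<bar> | i. i < k})
      else (\<Sum>i<k. \<bar>x i\<bar> powr real_of_ereal p) powr (1 / real_of_ereal p))"

definition mv :: "nat \<Rightarrow> (nat \<Rightarrow> nat \<Rightarrow> real) \<Rightarrow> (nat \<Rightarrow> real) \<Rightarrow> (nat \<Rightarrow> real)" where
  "mv c A x = (\<lambda>i. \<Sum>j<c. A i j * x j)"

definition mm :: "nat \<Rightarrow> (nat \<Rightarrow> nat \<Rightarrow> real) \<Rightarrow> (nat \<Rightarrow> nat \<Rightarrow> real) \<Rightarrow> (nat \<Rightarrow> nat \<Rightarrow> real)" where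
  "mm k A B = (\<lambda>i j. \<Sum>t<k. A i t * B t j)"

definition idm :: "nat \<Rightarrow> nat \<Rightarrow> real" where
  "idm = (\<lambda>i j. if i = j then 1 else 0)"

definition opnorm :: "ereal \<Rightarrow> nat \<Rightarrow> nat \<Rightarrow> (nat \<Rightarrow> nat \<Rightarrow> real) \<Rightarrow> real" where
  "opnorm p r c A = Sup {lpnorm p r (mv c A x) | x. lpnorm p c x \<le> 1}"

definition slope_restricted :: "(real \<Rightarrow> real) \<Rightarrow> real \<Rightarrow> real \<Rightarrow> bool" where
  "slope_restricted s a b \<longleftrightarrow> (\<forall>x y. x \<noteq> y \<longrightarrow> a \<le> (s x - s y) / (x - y) \<and> (s x - s y) / (x - y) \<le> b)"

text \<open>Network: dims n, weights W l (an n l x n (l-1) matrix), activations sig l i.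
  act l x = a^(l)(x), preact l x = z^(l)(x) (for l >= 1).\<close>
fun act :: "(nat \<Rightarrow> nat) \<Rightarrow> (nat \<Rightarrow> nat \<Rightarrow> nat \<Rightarrow> real) \<Rightarrow> (nat \<Rightarrow> nat \<Rightarrow> real \<Rightarrow> real)
             \<Rightarrow> nat \<Rightarrow> (nat \<Rightarrow> real) \<Rightarrow> (nat \<Rightarrow> real)" where
  "act n W sig 0 x = x"
| "act n W sig (Suc l) x = (\<lambda>i. sig (Suc l) i (mv (n l) (W (Suc l)) (act n W sig l x) i))"

definition preact :: "(nat \<Rightarrow> nat) \<Rightarrow> (nat \<Rightarrow> nat \<Rightarrow> nat \<Rightarrow> real) \<Rightarrow> (nat \<Rightarrow> nat \<Rightarrow> real \<Rightarrow> real)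
             \<Rightarrow> nat \<Rightarrow> (nat \<Rightarrow> real) \<Rightarrow> (nat \<Rightarrow> real)" where
  "preact n W sig l x = mv (n (l - 1)) (W l) (act n W sig (l - 1) x)"

text \<open>prodDW n W d a b = D^(b) W^(b) ... D^(a) W^(a); identity if b < a.\<close>
fun prodDW :: "(nat \<Rightarrow> nat) \<Rightarrow> (nat \<Rightarrow> nat \<Rightarrow> nat \<Rightarrow> real) \<Rightarrow> (nat \<Rightarrow> nat \<Rightarrow> real)
               \<Rightarrow> nat \<Rightarrow> nat \<Rightarrow> (nat \<Rightarrow> nat \<Rightarrow> real)" where
  "prodDW n W d a 0 = (if a \<le> 0 then (\<lambda>r c. d 0 r * W 0 r c) else idm)"
| "prodDW n W d a (Suc b) =
     (if Suc b < a then idm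
      else if Suc b = a then (\<lambda>r c. d a r * W a r c)
      else mm (n b) (\<lambda>r c. d (Suc b) r * W (Suc b) r c) (prodDW n W d a b))"

end

theory Submission
  imports Defs
begin


lemma p_cases:
  assumes "1 \<le> (p::ereal)"
  obtains "p = \<infinity>" | q where "p = ereal q" "1 \<le> q" "real_of_ereal p = q"
  using assms by (cases p) auto

lemma lpnorm_inf: "k > 0 \<Longrightarrow> lpnorm \<infinity> k x = Max ((\<lambda>i. \<bar>x i\<bar>) ` {..<k})"
  unfolding lpnorm_def by (simp, intro arg_cong[where f=Max], auto)

lemma lpnorm_fin: "lpnorm (ereal q) k x = (\<Sum>i<k. \<bar>x i\<bar> powr q) powr (1 / q)"
  unfolding lpnorm_def by simp

lemma lpnorm_nonneg: "0 \<le> lpnorm p k x"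
proof (cases "p = \<infinity>")
  case True
  show ?thesis
  proof (cases "k = 0")
    case False
    then have "\<bar>x 0\<bar> \<le> Max ((\<lambda>i. \<bar>x i\<bar>) ` {..<k})" by (intro Max_ge) auto
    then have "0 \<le> Max ((\<lambda>i. \<bar>x i\<bar>) ` {..<k})" using abs_ge_zero order_trans by blast
    then show ?thesis using True False by (simp add: lpnorm_inf)
  qed (simp add: lpnorm_def True)
qed (simp add: lpnorm_def)

lemma lpnorm_cong: "(\<And>i. i < k \<Longrightarrow> x i = y i) \<Longrightarrow> lpnorm p k x = lpnorm p k y"
proof (cases "p = \<infinity> \<and> k > 0")
  case True
  assume h: "\<And>i. i < k \<Longrightarrow> x i = y i"
  then have "(\<lambda>i. \<bar>x i\<bar>) ` {..<k} = (\<lambda>i. \<bar>y i\<bar>) ` {..<k}" by auto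
  then show ?thesis using True by (simp add: lpnorm_inf)
next
  case False
  assume h: "\<And>i. i < k \<Longrightarrow> x i = y i"
  then show ?thesis using False unfolding lpnorm_def by (auto intro!: sum.cong)
qed

lemma lpnorm_mono:
  assumes p: "1 \<le> p" and le: "\<And>i. i < k \<Longrightarrow> \<bar>x i\<bar> \<le> \<bar>y i\<bar>"
  shows "lpnorm p k x \<le> lpnorm p k y"
  using p
proof (cases rule: p_cases)
  case 1
  show ?thesis
  proof (cases "k = 0")
    case False
    have k0: "k > 0" using False by simp
    show ?thesis unfolding 1 lpnorm_inf[OF k0]
    proof (rule Max.boundedI)
      fix a assume "a \<in> (\<lambda>i. \<bar>x i\<bar>) ` {..<k}"
      then obtain i where i: "i < k" "a = \<bar>x i\<bar>" by auto
      have "\<bar>y i\<bar> \<le> Max ((\<lambda>i. \<bar>y i\<bar>) ` {..<k})" using i by (intro Max_ge) auto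
      then show "a \<le> Max ((\<lambda>i. \<bar>y i\<bar>) ` {..<k})" using le[OF i(1)] i by linarith
    qed (use False in auto)
  qed (simp add: lpnorm_def 1)
next
  case (2 q)
  have "(\<Sum>i<k. \<bar>x i\<bar> powr q) \<le> (\<Sum>i<k. \<bar>y i\<bar> powr q)"
    using 2 le by (intro sum_mono powr_mono2) auto
  then show ?thesis unfolding 2(1) lpnorm_fin using 2
    by (intro powr_mono2) (auto intro: sum_nonneg)
qed

lemma lpnorm_coord:
  assumes p: "1 \<le> p" and i: "i < k"
  shows "\<bar>x i\<bar> \<le> lpnorm p k x"
  using p
proof (cases rule: p_cases)
  case 1
  show ?thesis unfolding 1 lpnorm_inf[OF le_less_trans[OF le0 i]] using i by (intro Max_ge) auto
next
  case (2 q)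
  have "\<bar>x i\<bar> powr q \<le> (\<Sum>i<k. \<bar>x i\<bar> powr q)"
    using i by (intro member_le_sum) auto
  then have "(\<bar>x i\<bar> powr q) powr (1/q) \<le> (\<Sum>i<k. \<bar>x i\<bar> powr q) powr (1/q)"
    using 2 by (intro powr_mono2) auto
  also have "(\<bar>x i\<bar> powr q) powr (1/q) = \<bar>x i\<bar>" using 2 by (simp add: powr_powr)
  finally show ?thesis unfolding 2(1) lpnorm_fin .
qed

lemma lpnorm_zero_imp:
  assumes "1 \<le> p" "lpnorm p k x = 0" "i < k" shows "x i = 0"
  using lpnorm_coord[OF assms(1,3), of x] assms(2) by simp

lemma lpnorm_zero: "lpnorm p k (\<lambda>i. 0) = 0"
proof (cases "p = \<infinity> \<and> k > 0")
  case True
  then have "(\<lambda>i. \<bar>0::real\<bar>) ` {..<k} = {0}" by auto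
  then show ?thesis using True by (simp add: lpnorm_inf)
qed (auto simp: lpnorm_def)

lemma powr_le_self: "0 \<le> (a::real) \<Longrightarrow> a \<le> 1 \<Longrightarrow> 1 \<le> q \<Longrightarrow> a powr q \<le> a"
  by (metis powr_one powr_mono')

lemma conv_powr:
  fixes u v t q :: real
  assumes "0 \<le> u" "0 \<le> v" "0 \<le> t" "t \<le> 1" "1 \<le> q"
  shows "(t * u + (1 - t) * v) powr q \<le> t * u powr q + (1-t) * v powr q"
proof (cases "u = 0 \<or> v = 0")
  case True
  then show ?thesis
  proof
    assume u: "u = 0"
    have "((1 - t) * v) powr q = (1 - t) powr q * v powr q" using assms by (simp add: powr_mult)
    also have "\<dots> \<le> (1-t) * v powr q" using assms powr_le_self[of "1-t" q]
      by (intro mult_right_mono) auto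
    finally show ?thesis using u assms by simp
  next
    assume v: "v = 0"
    have "(t * u) powr q = t powr q * u powr q" using assms by (simp add: powr_mult)
    also have "\<dots> \<le> t * u powr q" using assms powr_le_self[of "t" q]
      by (intro mult_right_mono) auto
    finally show ?thesis using v assms by simp
  qed
next
  case False
  have "(\<lambda>x. x powr q) ((1 - (1-t)) *\<^sub>R u + (1-t) *\<^sub>R v) \<le> (1 - (1-t)) * (\<lambda>x. x powr q) u + (1-t) * (\<lambda>x. x powr q) v"
    using False assms by (intro convex_onD[OF powr_convex]) auto
  then show ?thesis by simp
qed

lemma lpnorm_scale:
  assumes p: "1 \<le> p"
  shows "lpnorm p k (\<lambda>i. c * x i) = \<bar>c\<bar> * lpnorm p k x"
  using p
proof (cases rule: p_cases)
  case 1
  show ?thesis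
  proof (cases "k = 0")
    case False
    have k0: "k > 0" using False by simp
    have fin: "finite ((\<lambda>i. \<bar>x i\<bar>) ` {..<k})" "(\<lambda>i. \<bar>x i\<bar>) ` {..<k} \<noteq> {}" using k0 by auto
    obtain i0 where i0: "i0 < k" "\<bar>x i0\<bar> = Max ((\<lambda>i. \<bar>x i\<bar>) ` {..<k})"
      using Max_in[OF fin] by auto
    have "Max ((\<lambda>i. \<bar>c * x i\<bar>) ` {..<k}) = \<bar>c\<bar> * Max ((\<lambda>i. \<bar>x i\<bar>) ` {..<k})"
    proof (rule antisym)
      show "Max ((\<lambda>i. \<bar>c * x i\<bar>) ` {..<k}) \<le> \<bar>c\<bar> * Max ((\<lambda>i. \<bar>x i\<bar>) ` {..<k})"
      proof (rule Max.boundedI)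
        fix a assume "a \<in> (\<lambda>i. \<bar>c * x i\<bar>) ` {..<k}"
        then obtain i where i: "i < k" "a = \<bar>c * x i\<bar>" by auto
        have "\<bar>x i\<bar> \<le> Max ((\<lambda>i. \<bar>x i\<bar>) ` {..<k})" using i by (intro Max_ge) auto
        then show "a \<le> \<bar>c\<bar> * Max ((\<lambda>i. \<bar>x i\<bar>) ` {..<k})" using i
          by (simp add: abs_mult mult_left_mono)
      qed (use k0 in auto)
      show "\<bar>c\<bar> * Max ((\<lambda>i. \<bar>x i\<bar>) ` {..<k}) \<le> Max ((\<lambda>i. \<bar>c * x i\<bar>) ` {..<k})"
        using i0 by (intro Max_ge) (auto simp: abs_mult intro!: image_eqI[where x=i0])
    qed
    then show ?thesis unfolding 1 lpnorm_inf[OF k0] .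
  qed (simp add: lpnorm_def 1)
next
  case (2 q)
  have "(\<Sum>i<k. \<bar>c * x i\<bar> powr q) = \<bar>c\<bar> powr q * (\<Sum>i<k. \<bar>x i\<bar> powr q)"
    by (simp add: abs_mult powr_mult sum_distrib_left)
  then have "(\<Sum>i<k. \<bar>c * x i\<bar> powr q) powr (1/q) = (\<bar>c\<bar> powr q) powr (1/q) * (\<Sum>i<k. \<bar>x i\<bar> powr q) powr (1/q)"
    by (simp add: powr_mult sum_nonneg)
  also have "(\<bar>c\<bar> powr q) powr (1/q) = \<bar>c\<bar>" using 2 by (simp add: powr_powr)
  finally show ?thesis unfolding 2(1) lpnorm_fin .
qed

lemma lpnorm_triangle:
  assumes p: "1 \<le> p"
  shows "lpnorm p k (\<lambda>i. x i + y i) \<le> lpnorm p k x + lpnorm p k y"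
proof (cases "lpnorm p k x = 0 \<or> lpnorm p k y = 0")
  case True
  then show ?thesis
  proof
    assume h: "lpnorm p k x = 0"
    have "lpnorm p k (\<lambda>i. x i + y i) = lpnorm p k y"
      using lpnorm_zero_imp[OF p h] by (intro lpnorm_cong) auto
    then show ?thesis using h by simp
  next
    assume h: "lpnorm p k y = 0"
    have "lpnorm p k (\<lambda>i. x i + y i) = lpnorm p k x"
      using lpnorm_zero_imp[OF p h] by (intro lpnorm_cong) auto
    then show ?thesis using h by simp
  qed
next
  case False
  define a where "a = lpnorm p k x"
  define b where "b = lpnorm p k y"
  have a: "a > 0" and b: "b > 0" using False lpnorm_nonneg[of p k] unfolding a_def b_def
    by (auto simp: order.order_iff_strict)
  show ?thesis using p
  proof (cases rule: p_cases)
    case 1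
    have k0: "k > 0"
    proof (rule ccontr)
      assume "\<not> k > 0"
      then have "lpnorm p k x = 0" by (simp add: lpnorm_def 1)
      then show False using False by simp
    qed
    show ?thesis unfolding 1 lpnorm_inf[OF k0]
    proof (rule Max.boundedI)
      fix c assume "c \<in> (\<lambda>i. \<bar>x i + y i\<bar>) ` {..<k}"
      then obtain i where i: "i < k" "c = \<bar>x i + y i\<bar>" by auto
      have "\<bar>x i\<bar> \<le> Max ((\<lambda>i. \<bar>x i\<bar>) ` {..<k})" "\<bar>y i\<bar> \<le> Max ((\<lambda>i. \<bar>y i\<bar>) ` {..<k})"
        using i by (auto intro!: Max_ge)
      then show "c \<le> Max ((\<lambda>i. \<bar>x i\<bar>) ` {..<k}) + Max ((\<lambda>i. \<bar>y i\<bar>) ` {..<k})"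
        using i by linarith
    qed (use k0 in auto)
  next
    case (2 q)
    define S where "S = (\<lambda>z. \<Sum>i<k. \<bar>z i\<bar> powr q)"
    have Snn: "S z \<ge> 0" for z unfolding S_def by (auto intro: sum_nonneg)
    have N: "lpnorm p k z = S z powr (1/q)" for z unfolding 2(1) lpnorm_fin S_def ..
    have Sa: "a powr q = S x" unfolding a_def N using 2 Snn by (simp add: powr_powr)
    have Sb: "b powr q = S y" unfolding b_def N using 2 Snn by (simp add: powr_powr)
    define t where "t = a / (a + b)"
    have t: "0 \<le> t" "t \<le> 1" "1 - t = b / (a+b)" using a b unfolding t_def by (auto simp: field_simps)
    have pt: "(\<bar>x i + y i\<bar> / (a+b)) powr q \<le> t * (\<bar>x i\<bar> powr q / S x) + (1-t) * (\<bar>y i\<bar> powr q / S y)" for i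
    proof -
      have "\<bar>x i + y i\<bar> / (a+b) \<le> t * (\<bar>x i\<bar> / a) + (1-t) * (\<bar>y i\<bar> / b)"
        using a b unfolding t(3) unfolding t_def
        by (simp add: add_divide_distrib[symmetric] divide_right_mono abs_triangle_ineq)
      then have "(\<bar>x i + y i\<bar> / (a+b)) powr q \<le> (t * (\<bar>x i\<bar> / a) + (1-t) * (\<bar>y i\<bar> / b)) powr q"
        using 2 a b by (intro powr_mono2) auto
      also have "\<dots> \<le> t * (\<bar>x i\<bar> / a) powr q + (1-t) * (\<bar>y i\<bar> / b) powr q"
        using a b t 2 by (intro conv_powr) auto
      finally show ?thesis using Sa Sb by (simp add: powr_divide)
    qed
    have "(\<Sum>i<k. (\<bar>x i + y i\<bar> / (a+b)) powr q) \<le> (\<Sum>i<k. t * (\<bar>x i\<bar> powr q / S x) + (1-t) * (\<bar>y i\<bar> powr q / S y))"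
      by (intro sum_mono pt)
    also have "\<dots> = t * ((\<Sum>i<k. \<bar>x i\<bar> powr q) / S x) + (1-t) * ((\<Sum>i<k. \<bar>y i\<bar> powr q) / S y)"
      by (simp add: sum.distrib sum_distrib_left[symmetric] sum_divide_distrib[symmetric])
    also have "\<dots> = t * (S x / S x) + (1-t) * (S y / S y)"
      unfolding S_def ..
    also have "\<dots> = 1"
    proof -
      have "S x \<noteq> 0" "S y \<noteq> 0" using Sa Sb a b by (metis powr_gt_zero less_irrefl)+
      then show ?thesis by simp
    qed
    finally have "S (\<lambda>i. x i + y i) / (a+b) powr q \<le> 1"
      unfolding S_def using a b by (simp add: powr_divide sum_divide_distrib)
    then have "S (\<lambda>i. x i + y i) \<le> (a+b) powr q" using a b by (simp add: divide_le_eq)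
    then have "S (\<lambda>i. x i + y i) powr (1/q) \<le> ((a+b) powr q) powr (1/q)"
      using 2 Snn by (intro powr_mono2) auto
    also have "\<dots> = a + b" using a b 2 by (simp add: powr_powr)
    finally show ?thesis unfolding N[symmetric] a_def b_def .
  qed
qed



lemma lpnorm_sum:
  assumes p: "1 \<le> p" and fin: "finite J"
  shows "lpnorm p k (\<lambda>i. \<Sum>j\<in>J. f j i) \<le> (\<Sum>j\<in>J. lpnorm p k (f j))"
  using fin
proof (induction J rule: finite_induct)
  case empty
  then show ?case by (simp add: lpnorm_zero)
next
  case (insert a J)
  have "lpnorm p k (\<lambda>i. \<Sum>j\<in>insert a J. f j i) = lpnorm p k (\<lambda>i. f a i + (\<Sum>j\<in>J. f j i))"
    using insert by simp
  also have "\<dots> \<le> lpnorm p k (f a) + lpnorm p k (\<lambda>i. \<Sum>j\<in>J. f j i)"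
    using lpnorm_triangle[OF p] by simp
  also have "\<dots> \<le> lpnorm p k (f a) + (\<Sum>j\<in>J. lpnorm p k (f j))" using insert by simp
  finally show ?case using insert by simp
qed

lemma mv_diff: "(\<lambda>i. mv c A x i - mv c A y i) = mv c A (\<lambda>j. x j - y j)"
  unfolding mv_def by (auto simp: sum_subtractf[symmetric] algebra_simps)

lemma mv_add: "mv c A (\<lambda>j. x j + y j) = (\<lambda>i. mv c A x i + mv c A y i)"
  unfolding mv_def by (auto simp: sum.distrib[symmetric] algebra_simps)

lemma mv_scale: "mv c A (\<lambda>j. t * x j) = (\<lambda>i. t * mv c A x i)"
  unfolding mv_def by (auto simp: sum_distrib_left algebra_simps)

lemma mv_rowscale: "mv c (\<lambda>r j. s r * A r j) x = (\<lambda>i. s i * mv c A x i)"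
  unfolding mv_def by (auto simp: sum_distrib_left algebra_simps)

lemma mv_cong_vec: "(\<And>j. j < c \<Longrightarrow> u j = v j) \<Longrightarrow> mv c A u = mv c A v"
  unfolding mv_def by auto

lemma mv_cong_mat: "(\<And>i j. j < c \<Longrightarrow> A i j = B i j) \<Longrightarrow> mv c A v = mv c B v"
  unfolding mv_def by auto

lemma mv_mv: "mv c A (mv c' B v) = mv c' (mm c A B) v"
  unfolding mv_def mm_def
  apply (rule ext)
  apply (simp only: sum_distrib_left sum_distrib_right)
  apply (subst sum.swap)
  apply (simp add: mult.assoc)
  done

lemma mm_assoc: "mm k (mm k' A B) C = mm k' A (mm k B C)"
  unfolding mm_def
  apply (rule ext, rule ext)
  apply (simp only: sum_distrib_left sum_distrib_right)
  apply (subst sum.swap)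
  apply (simp add: mult.assoc)
  done

lemma mm_idm: "j < k \<Longrightarrow> mm k A idm i j = A i j"
  unfolding mm_def idm_def by (simp add: sum.delta' if_distrib[of "\<lambda>x. A i _ * x"] cong: if_cong)

lemma mv_zero_vec: "(\<And>j. j < c \<Longrightarrow> v j = 0) \<Longrightarrow> mv c A v = (\<lambda>i. 0)"
  unfolding mv_def by auto

lemma opnorm_bound:
  assumes p: "1 \<le> p"
  shows "lpnorm p r (mv c A x) \<le> opnorm p r c A * lpnorm p c x"
    and "0 \<le> opnorm p r c A"
proof -
  define K where "K = (\<Sum>i<r. \<Sum>j<c. \<bar>A i j\<bar>)"
  define X where "X = {lpnorm p r (mv c A x) | x. lpnorm p c x \<le> 1}"
  have bdd: "bdd_above X"
  proof (rule bdd_aboveI)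
    fix y assume "y \<in> X"
    then obtain x where x: "y = lpnorm p r (mv c A x)" "lpnorm p c x \<le> 1" unfolding X_def by auto
    have "\<bar>mv c A x i\<bar> \<le> \<bar>K\<bar>" if i: "i < r" for i
    proof -
      have "\<bar>mv c A x i\<bar> \<le> (\<Sum>j<c. \<bar>A i j * x j\<bar>)" unfolding mv_def by (rule sum_abs)
      also have "\<dots> \<le> (\<Sum>j<c. \<bar>A i j\<bar>)"
      proof (rule sum_mono)
        fix j assume "j \<in> {..<c}"
        then have "\<bar>x j\<bar> \<le> 1" using lpnorm_coord[OF p, of j c x] x(2) by simp
        then show "\<bar>A i j * x j\<bar> \<le> \<bar>A i j\<bar>" by (simp add: abs_mult mult_left_le)
      qed
      also have "\<dots> \<le> K" unfolding K_def using i
        by (intro member_le_sum[where f="\<lambda>i. \<Sum>j<c. \<bar>A i j\<bar>"]) (auto intro: sum_nonneg)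
      finally show ?thesis by simp
    qed
    then have "lpnorm p r (mv c A x) \<le> lpnorm p r (\<lambda>i. K)"
      by (intro lpnorm_mono[OF p]) auto
    then show "y \<le> lpnorm p r (\<lambda>i. K)" using x by simp
  qed
  have zX: "0 \<in> X" unfolding X_def
    by (rule CollectI, rule exI[of _ "\<lambda>i. 0"]) (simp add: lpnorm_zero mv_zero_vec)
  have op: "opnorm p r c A = Sup X" unfolding opnorm_def X_def ..
  show "0 \<le> opnorm p r c A" unfolding op using cSup_upper[OF zX bdd] .
  show "lpnorm p r (mv c A x) \<le> opnorm p r c A * lpnorm p c x"
  proof (cases "lpnorm p c x = 0")
    case True
    have "mv c A x = (\<lambda>i. 0)" using lpnorm_zero_imp[OF p True] by (intro mv_zero_vec) auto
    then show ?thesis using True by (simp add: lpnorm_zero)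
  next
    case False
    define N where "N = lpnorm p c x"
    have N: "N > 0" using False lpnorm_nonneg[of p c x] unfolding N_def by simp
    have "lpnorm p c (\<lambda>j. (1/N) * x j) = \<bar>1/N\<bar> * N"
      unfolding N_def by (rule lpnorm_scale[OF p])
    then have "lpnorm p c (\<lambda>j. (1/N) * x j) = 1" using N by simp
    then have "lpnorm p r (mv c A (\<lambda>j. (1/N) * x j)) \<in> X" unfolding X_def by auto
    then have "lpnorm p r (mv c A (\<lambda>j. (1/N) * x j)) \<le> opnorm p r c A" unfolding op
      by (rule cSup_upper[OF _ bdd])
    moreover have "lpnorm p r (mv c A (\<lambda>j. (1/N) * x j)) = \<bar>1/N\<bar> * lpnorm p r (mv c A x)"
      unfolding mv_scale by (rule lpnorm_scale[OF p])
    ultimately have "(1/N) * lpnorm p r (mv c A x) \<le> opnorm p r c A" using N by simp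
    then show ?thesis using N unfolding N_def[symmetric] by (simp add: field_simps)
  qed
qed



definition dA where "dA n W sig x x' k = (\<lambda>i. act n W sig k x i - act n W sig k x' i)"
definition res where
  "res n W sig d x x' j = (\<lambda>i. dA n W sig x x' j i - d j i * mv (n (j-1)) (W j) (dA n W sig x x' (j-1)) i)"

lemma prodDW_step:
  assumes "1 \<le> a" "a \<le> Suc k" "c < n (a-1)"
  shows "prodDW n W d a (Suc k) i c = mm (n k) (\<lambda>r c. d (Suc k) r * W (Suc k) r c) (prodDW n W d a k) i c"
proof (cases "a = Suc k")
  case True
  have "prodDW n W d a k = idm"
    using True by (cases k) auto
  then show ?thesis using True assms by (simp add: mm_idm)
next
  case False
  then show ?thesis using assms by simp
qed

lemma shift_mat:
  assumes "1 \<le> a" "a \<le> Suc k"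
  shows "mv (n (a-1)) (mm (n k) (mm (n (Suc k)) M (\<lambda>r c. d (Suc k) r * W (Suc k) r c)) (prodDW n W d a k)) w
       = mv (n (a-1)) (mm (n (Suc k)) M (prodDW n W d a (Suc k))) w"
  unfolding mm_assoc
  apply (rule mv_cong_mat)
  apply (unfold mm_def[of "n (Suc k)"])
  apply (rule sum.cong[OF refl])
  apply (simp only: prodDW_step[OF assms])
  done

lemma unroll:
  "mv (n k) M (dA n W sig x x' k) =
    (\<lambda>i. mv (n 0) (mm (n k) M (prodDW n W d 1 k)) (dA n W sig x x' 0) i
       + (\<Sum>j=1..k. mv (n j) (mm (n k) M (prodDW n W d (j+1) k)) (res n W sig d x x' j) i))"
proof (induction k arbitrary: M)
  case 0
  show ?case
    by (simp, rule mv_cong_mat) (simp add: mm_idm)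
next
  case (Suc k)
  define DW where "DW = (\<lambda>r c. d (Suc k) r * W (Suc k) r c)"
  define M' where "M' = mm (n (Suc k)) M DW"
  have e1: "dA n W sig x x' (Suc k) = (\<lambda>i. mv (n k) DW (dA n W sig x x' k) i + res n W sig d x x' (Suc k) i)"
    unfolding DW_def mv_rowscale res_def by simp
  have "mv (n (Suc k)) M (dA n W sig x x' (Suc k)) =
      (\<lambda>i. mv (n k) M' (dA n W sig x x' k) i + mv (n (Suc k)) M (res n W sig d x x' (Suc k)) i)"
    unfolding e1 mv_add M'_def mv_mv ..
  also have "\<dots> = (\<lambda>i. mv (n 0) (mm (n k) M' (prodDW n W d 1 k)) (dA n W sig x x' 0) i
       + (\<Sum>j=1..k. mv (n j) (mm (n k) M' (prodDW n W d (j+1) k)) (res n W sig d x x' j) i)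
       + mv (n (Suc k)) M (res n W sig d x x' (Suc k)) i)"
    unfolding Suc.IH ..
  also have "\<dots> = (\<lambda>i. mv (n 0) (mm (n (Suc k)) M (prodDW n W d 1 (Suc k))) (dA n W sig x x' 0) i
       + (\<Sum>j=1..Suc k. mv (n j) (mm (n (Suc k)) M (prodDW n W d (j+1) (Suc k))) (res n W sig d x x' j) i))"
  proof (rule ext)
    fix i
    have a: "mv (n 0) (mm (n k) M' (prodDW n W d 1 k)) v = mv (n 0) (mm (n (Suc k)) M (prodDW n W d 1 (Suc k))) v" for v
      using shift_mat[of 1 k n M d W] unfolding M'_def DW_def by simp
    have b: "mv (n j) (mm (n k) M' (prodDW n W d (j+1) k)) v = mv (n j) (mm (n (Suc k)) M (prodDW n W d (j+1) (Suc k))) v"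
      if "j \<in> {1..k}" for j v
      using shift_mat[of "j+1" k n M d W] that unfolding M'_def DW_def by simp
    have c: "mv (n (Suc k)) M v = mv (n (Suc k)) (mm (n (Suc k)) M (prodDW n W d (Suc k + 1) (Suc k))) v" for v
      by (rule mv_cong_mat) (simp add: mm_idm)
    show "mv (n 0) (mm (n k) M' (prodDW n W d 1 k)) (dA n W sig x x' 0) i
       + (\<Sum>j=1..k. mv (n j) (mm (n k) M' (prodDW n W d (j+1) k)) (res n W sig d x x' j) i)
       + mv (n (Suc k)) M (res n W sig d x x' (Suc k)) i
      = mv (n 0) (mm (n (Suc k)) M (prodDW n W d 1 (Suc k))) (dA n W sig x x' 0) i
       + (\<Sum>j=1..Suc k. mv (n j) (mm (n (Suc k)) M (prodDW n W d (j+1) (Suc k))) (res n W sig d x x' j) i)"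
      unfolding a c using b by (simp add: sum.cl_ivl_Suc)
  qed
  finally show ?case .
qed



lemma slope_res:
  assumes "slope_restricted f a b" "a \<le> b" "dd \<le> (a + b) / 2"
  shows "\<bar>f u - f v - dd * (u - v)\<bar> \<le> (b - dd) * \<bar>u - v\<bar>"
proof (cases "u = v")
  case False
  define sl where "sl = (f u - f v) / (u - v)"
  have sl: "a \<le> sl" "sl \<le> b" using assms(1) False unfolding slope_restricted_def sl_def by auto
  have "f u - f v = sl * (u - v)" using False unfolding sl_def by simp
  then have "f u - f v - dd * (u - v) = (sl - dd) * (u - v)" by (simp add: algebra_simps)
  moreover have "\<bar>sl - dd\<bar> \<le> b - dd" using sl assms by auto
  ultimately show ?thesis by (simp add: abs_mult mult_right_mono)
qed simp

lemma dA_mv: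
  "mv (n (j-1)) (W j) (dA n W sig x x' (j-1)) i
   = mv (n (j-1)) (W j) (act n W sig (j-1) x) i - mv (n (j-1)) (W j) (act n W sig (j-1) x') i"
  unfolding dA_def using fun_cong[OF mv_diff[symmetric], of _ _ "act n W sig (j-1) x" "act n W sig (j-1) x'" i]
  by simp

lemma res_eq:
  assumes "1 \<le> j"
  shows "res n W sig d x x' j i =
     sig j i (mv (n (j-1)) (W j) (act n W sig (j-1) x) i) - sig j i (mv (n (j-1)) (W j) (act n W sig (j-1) x') i)
     - d j i * (mv (n (j-1)) (W j) (act n W sig (j-1) x) i - mv (n (j-1)) (W j) (act n W sig (j-1) x') i)"
proof -
  obtain j' where j: "j = Suc j'" using assms by (cases j) auto
  show ?thesis unfolding res_def dA_mv unfolding dA_def j by simp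
qed


theorem theorem2:
  fixes p :: ereal
    and L :: nat
    and n :: "nat \<Rightarrow> nat"
    and W :: "nat \<Rightarrow> nat \<Rightarrow> nat \<Rightarrow> real"
    and sig :: "nat \<Rightarrow> nat \<Rightarrow> real \<Rightarrow> real"
    and \<alpha> \<beta> d :: "nat \<Rightarrow> nat \<Rightarrow> real"
    and m :: "nat \<Rightarrow> real"
  assumes p: "1 \<le> p"
    and L: "1 \<le> L"
    and slope: "\<And>l i. l \<in> {1..L-1} \<Longrightarrow> i < n l \<Longrightarrow> slope_restricted (sig l i) (\<alpha> l i) (\<beta> l i)"
    and alpha_nonneg: "\<And>l i. l \<in> {1..L-1} \<Longrightarrow> i < n l \<Longrightarrow> 0 \<le> \<alpha> l i"
    and alpha_le_beta: "\<And>l i. l \<in> {1..L-1} \<Longrightarrow> i < n l \<Longrightarrow> \<alpha> l i \<le> \<beta> l i"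
    and d_nonneg: "\<And>l i. l \<in> {1..L-1} \<Longrightarrow> i < n l \<Longrightarrow> 0 \<le> d l i"
    and d_le: "\<And>l i. l \<in> {1..L-1} \<Longrightarrow> i < n l \<Longrightarrow> d l i \<le> (\<alpha> l i + \<beta> l i) / 2"
    and m1: "m 1 = opnorm p (n 1) (n 0)
               (\<lambda>r c. (if 1 = L then 1 else \<beta> 1 r - d 1 r) * W 1 r c)"
    and mrec: "\<And>l. l \<in> {2..L} \<Longrightarrow>
       m l = opnorm p (n l) (n 0)
               (mm (n (l - 1)) (\<lambda>r c. (if l = L then 1 else \<beta> l r - d l r) * W l r c)
                   (prodDW n W d 1 (l - 1)))
           + (\<Sum>j = 1..l - 1. opnorm p (n l) (n j)
               (mm (n (l - 1)) (\<lambda>r c. (if l = L then 1 else \<beta> l r - d l r) * W l r c)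
                   (prodDW n W d (j + 1) (l - 1))) * m j)"
  shows "\<forall>l \<in> {1..L}. \<forall>x x'.
           lpnorm p (n l)
             ((\<lambda>i. (if l = L then 1 else \<beta> l i - d l i) * preact n W sig l x i)
              - (\<lambda>i. (if l = L then 1 else \<beta> l i - d l i) * preact n W sig l x' i))
           \<le> m l * lpnorm p (n 0) (x - x')"
proof -
  define s where "s l i = (if l = L then 1 else \<beta> l i - d l i)" for l i
  have main: "\<forall>l. 1 \<le> l \<longrightarrow> l \<le> L \<longrightarrow>
      lpnorm p (n l) (\<lambda>i. s l i * mv (n (l-1)) (W l) (dA n W sig x x' (l-1)) i)
      \<le> m l * lpnorm p (n 0) (x - x')" for x x'
  proof (intro allI)
    fix l show "1 \<le> l \<longrightarrow> l \<le> L \<longrightarrow>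
      lpnorm p (n l) (\<lambda>i. s l i * mv (n (l-1)) (W l) (dA n W sig x x' (l-1)) i)
      \<le> m l * lpnorm p (n 0) (x - x')"
    proof (induction l rule: less_induct)
      case (less l)
      show ?case
      proof (intro impI)
        assume l1: "1 \<le> l" and lL: "l \<le> L"
        define NX where "NX = lpnorm p (n 0) (x - x')"
        have NXnn: "0 \<le> NX" unfolding NX_def by (rule lpnorm_nonneg)
        have dA0: "dA n W sig x x' 0 = x - x'" unfolding dA_def by (simp add: fun_diff_def)
        define M where "M = (\<lambda>r c. s l r * W l r c)"
        have vec: "(\<lambda>i. s l i * mv (n (l-1)) (W l) (dA n W sig x x' (l-1)) i) = mv (n (l-1)) M (dA n W sig x x' (l-1))"
          unfolding M_def mv_rowscale ..
        show "lpnorm p (n l) (\<lambda>i. s l i * mv (n (l-1)) (W l) (dA n W sig x x' (l-1)) i) \<le> m l * NX"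
        proof (cases "l = 1")
          case True
          have "lpnorm p (n l) (mv (n (l-1)) M (dA n W sig x x' (l-1))) \<le> opnorm p (n l) (n (l-1)) M * lpnorm p (n (l-1)) (dA n W sig x x' (l-1))"
            by (rule opnorm_bound(1)[OF p])
          also have "\<dots> = m l * NX" using m1 dA0 unfolding True M_def s_def NX_def by simp
          finally show ?thesis unfolding vec .
        next
          case False
          then have l2: "l \<in> {2..L}" using l1 lL by auto
          define k where "k = l - 1"
          have k1: "1 \<le> k" and kl: "k < l" using l2 unfolding k_def by auto
          define A0 where "A0 = mm (n k) M (prodDW n W d 1 k)"
          define A where "A j = mm (n k) M (prodDW n W d (j+1) k)" for j
          define R where "R j = res n W sig d x x' j" for j
          have "lpnorm p (n l) (mv (n k) M (dA n W sig x x' k))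
              = lpnorm p (n l) (\<lambda>i. mv (n 0) A0 (x - x') i + (\<Sum>j=1..k. mv (n j) (A j) (R j) i))"
            unfolding unroll[of n k M W sig x x' d] A0_def A_def R_def dA0 ..
          also have "\<dots> \<le> lpnorm p (n l) (mv (n 0) A0 (x - x')) + lpnorm p (n l) (\<lambda>i. \<Sum>j=1..k. mv (n j) (A j) (R j) i)"
            by (rule lpnorm_triangle[OF p])
          also have "\<dots> \<le> opnorm p (n l) (n 0) A0 * NX + (\<Sum>j=1..k. opnorm p (n l) (n j) (A j) * m j) * NX"
          proof (rule add_mono)
            show "lpnorm p (n l) (mv (n 0) A0 (x - x')) \<le> opnorm p (n l) (n 0) A0 * NX"
              unfolding NX_def by (rule opnorm_bound(1)[OF p])
            have "lpnorm p (n l) (\<lambda>i. \<Sum>j=1..k. mv (n j) (A j) (R j) i) \<le> (\<Sum>j=1..k. lpnorm p (n l) (mv (n j) (A j) (R j)))"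
              by (rule lpnorm_sum[OF p]) simp
            also have "\<dots> \<le> (\<Sum>j=1..k. opnorm p (n l) (n j) (A j) * m j * NX)"
            proof (rule sum_mono)
              fix j assume j: "j \<in> {1..k}"
              have jl: "j < l" "1 \<le> j" "j \<le> L" "j \<noteq> L" using j kl lL by auto
              have jL1: "j \<in> {1..L-1}" using jl by auto
              have "lpnorm p (n j) (R j) \<le> lpnorm p (n j) (\<lambda>i. s j i * mv (n (j-1)) (W j) (dA n W sig x x' (j-1)) i)"
              proof (rule lpnorm_mono[OF p])
                fix i assume i: "i < n j"
                have "\<bar>R j i\<bar> \<le> (\<beta> j i - d j i) * \<bar>mv (n (j-1)) (W j) (dA n W sig x x' (j-1)) i\<bar>"
                  unfolding R_def res_eq[OF jl(2)] dA_mv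
                  using slope[OF jL1 i] alpha_le_beta[OF jL1 i] d_le[OF jL1 i] by (rule slope_res)
                moreover have "0 \<le> \<beta> j i - d j i" using alpha_le_beta[OF jL1 i] d_le[OF jL1 i] by simp
                ultimately show "\<bar>R j i\<bar> \<le> \<bar>s j i * mv (n (j-1)) (W j) (dA n W sig x x' (j-1)) i\<bar>"
                  unfolding s_def using jl by (simp add: abs_mult)
              qed
              also have "\<dots> \<le> m j * NX" using less.IH[OF jl(1)] jl unfolding NX_def by (simp add: fun_diff_def)
              finally have Rj: "lpnorm p (n j) (R j) \<le> m j * NX" .
              have "lpnorm p (n l) (mv (n j) (A j) (R j)) \<le> opnorm p (n l) (n j) (A j) * lpnorm p (n j) (R j)"
                by (rule opnorm_bound(1)[OF p])
              also have "\<dots> \<le> opnorm p (n l) (n j) (A j) * (m j * NX)"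
                by (rule mult_left_mono[OF Rj opnorm_bound(2)[OF p]])
              finally show "lpnorm p (n l) (mv (n j) (A j) (R j)) \<le> opnorm p (n l) (n j) (A j) * m j * NX"
                by (simp add: mult.assoc)
            qed
            also have "\<dots> = (\<Sum>j=1..k. opnorm p (n l) (n j) (A j) * m j) * NX"
              by (simp add: sum_distrib_right)
            finally show "lpnorm p (n l) (\<lambda>i. \<Sum>j=1..k. mv (n j) (A j) (R j) i) \<le> (\<Sum>j=1..k. opnorm p (n l) (n j) (A j) * m j) * NX" .
          qed
          also have "\<dots> = m l * NX"
            using mrec[OF l2] unfolding A0_def A_def M_def s_def k_def by (simp add: algebra_simps)
          finally show ?thesis unfolding vec k_def .
        qed
      qed
    qed
  qed
  show ?thesis
  proof (intro ballI allI)
    fix l x x' assume l: "l \<in> {1..L}"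
    have eq: "(\<lambda>i. (if l = L then 1 else \<beta> l i - d l i) * preact n W sig l x i)
              - (\<lambda>i. (if l = L then 1 else \<beta> l i - d l i) * preact n W sig l x' i)
            = (\<lambda>i. s l i * mv (n (l-1)) (W l) (dA n W sig x x' (l-1)) i)"
      unfolding s_def preact_def dA_mv by (auto simp: fun_diff_def algebra_simps)
    show "lpnorm p (n l) ((\<lambda>i. (if l = L then 1 else \<beta> l i - d l i) * preact n W sig l x i)
              - (\<lambda>i. (if l = L then 1 else \<beta> l i - d l i) * preact n W sig l x' i))
           \<le> m l * lpnorm p (n 0) (x - x')"
      unfolding eq using main[of x x'] l by auto
  qed
qed

end
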